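(* Let $R>1$ and $N\ge1$ with $RN$ an integer. For every encoding channel $\mathcal E$ from $RN$ qubits to $N$ qubits together with a classical register $M$, and every decoding channel $\mathcal D$ from the $N$ qubits and $M$ back to $RN$ qubits, \[ F_c\bigl(\mathcal D\circ(\mathcal I_2^{\otimes N}\otimes\mathcal I_M)\circ\mathcal E\bigr)\le 2^{-(R-1)N}, \] where $\mathcal I_2$ is the one-qubit identity channel; i.e. the strong converse parameter of $\mathcal I_2$ at rate $R$ satisfies $\gamma^Q(\mathcal I_2,R)=R-1>0$.
   Context: $\log$ base 2. For a channel $\Lambda$ on $m$ qubits, the channel fidelity is $F_c(\Lambda)=\langle\Phi|(\mathrm{id}\otimes\Lambda)(\Phi)|\Phi\rangle$ with $\Phi$ the maximally entangled state on $2^m\times2^m$ dimensions. A strong converse with parameter $\gamma^Q(\mathcal N,R)>0$ for a channel $\mathcal N$ at rate $R$ means that for all $N$ and all encodings $\mathcal E$ of $RN$ qubits into the input of $\mathcal N^{\otimes N}$ plus free forward classical communication $M$, and all decodings $\mathcal D$, $F_c(\mathcal D\circ(\mathcal N^{\otimes N}\otimes\mathcal I_M)\circ\mathcal E)\le2^{-\gamma^Q(\mathcal N,R)N}$. *)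

theory Defs
  imports Complex_Main "Jordan_Normal_Form.Schur_Decomposition"
begin

definition kraus_channel :: "nat \<Rightarrow> nat \<Rightarrow> complex mat list \<Rightarrow> bool" where
  "kraus_channel din dout Ks \<longleftrightarrow>
     (\<forall>K\<in>set Ks. K \<in> carrier_mat dout din) \<and>
     foldr (\<lambda>K acc. mat_adjoint K * K + acc) Ks (0\<^sub>m din din) = 1\<^sub>m din"

definition apply_kraus :: "nat \<Rightarrow> complex mat list \<Rightarrow> complex mat \<Rightarrow> complex mat" where
  "apply_kraus dout Ks \<rho> = foldr (\<lambda>K acc. K * \<rho> * mat_adjoint K + acc) Ks (0\<^sub>m dout dout)"

definition mat_unit :: "nat \<Rightarrow> nat \<Rightarrow> nat \<Rightarrow> complex mat" where
  "mat_unit d i j = mat d d (\<lambda>(r, c). if r = i \<and> c = j then 1 else 0)"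

(* channel fidelity F_c(L) = <Phi|(id (x) L)(Phi)|Phi>, Phi maximally entangled on d x d;
   expanded: (1/d^2) sum_{i,j<d} <i| L(|i><j|) |j> *)
definition channel_fidelity :: "nat \<Rightarrow> (complex mat \<Rightarrow> complex mat) \<Rightarrow> complex" where
  "channel_fidelity d \<Lambda> =
     (\<Sum>i<d. \<Sum>j<d. \<Lambda> (mat_unit d i j) $$ (i, j)) / of_nat (d * d)"

(* System = (N qubits) (x) (classical register M of size m), basis index a*m + x,
   a < 2^N, x < m.  The register being classical means it is (completely) dephased
   in its computational basis; the identity channel on the N qubits acts trivially. *)
definition classical_reg_proj :: "nat \<Rightarrow> nat \<Rightarrow> nat \<Rightarrow> complex mat" where
  "classical_reg_proj N m x =
     mat (2 ^ N * m) (2 ^ N * m) (\<lambda>(r, c). if r = c \<and> r mod m = x then 1 else 0)"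

definition id_qubits_classical :: "nat \<Rightarrow> nat \<Rightarrow> complex mat list" where
  "id_qubits_classical N m = map (classical_reg_proj N m) [0..<m]"

end

theory Submission
  imports Defs
begin

lemma foldr_sum_carrier:
  "(\<forall>K\<in>set Ks. f K \<in> carrier_mat r r) \<Longrightarrow> foldr (\<lambda>K acc. f K + acc) Ks (0\<^sub>m r r) \<in> carrier_mat r r"
  by (induction Ks) auto

lemma foldr_sum_index:
  assumes "\<forall>K\<in>set Ks. f K \<in> carrier_mat r r" "a < r" "b < r"
  shows "foldr (\<lambda>K acc. f K + acc) Ks (0\<^sub>m r r) $$ (a,b) = (\<Sum>t<length Ks. f (Ks!t) $$ (a,b))"
  using assms
proof (induction Ks)
  case Nil then show ?case by simp
next
  case (Cons K Ks)
  have c: "foldr (\<lambda>K acc. f K + acc) Ks (0\<^sub>m r r) \<in> carrier_mat r r"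
    using Cons.prems by (intro foldr_sum_carrier) auto
  have "foldr (\<lambda>K acc. f K + acc) (K#Ks) (0\<^sub>m r r) $$ (a,b) = f K $$ (a,b) + foldr (\<lambda>K acc. f K + acc) Ks (0\<^sub>m r r) $$ (a,b)"
    using c Cons.prems by simp
  also have "\<dots> = f K $$ (a,b) + (\<Sum>t<length Ks. f (Ks!t) $$ (a,b))"
    using Cons by simp
  also have "\<dots> = (\<Sum>t<length (K#Ks). f ((K#Ks)!t) $$ (a,b))"
    unfolding length_Cons sum.lessThan_Suc_shift by simp
  finally show ?case .
qed

lemma adj_carrier: "K \<in> carrier_mat r c \<Longrightarrow> mat_adjoint K \<in> carrier_mat c r"
  unfolding mat_adjoint_def by auto

lemma adj_index: "K \<in> carrier_mat r c \<Longrightarrow> i < c \<Longrightarrow> j < r \<Longrightarrow> mat_adjoint K $$ (i,j) = cnj (K $$ (j,i))"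
  unfolding mat_adjoint_def by (auto simp: mat_of_rows_def)


lemma kraus_term_index:
  assumes "K \<in> carrier_mat r c" "\<rho> \<in> carrier_mat c c" "a < r" "b < r"
  shows "(K * \<rho> * mat_adjoint K) $$ (a,b) = (\<Sum>p<c. \<Sum>q<c. K $$ (a,p) * \<rho> $$ (p,q) * cnj (K $$ (b,q)))"
  using assms adj_carrier[OF assms(1)]
  by (auto simp: scalar_prod_def adj_index lessThan_atLeast0 sum_distrib_left mult.assoc intro!: sum.cong)

lemma adjK_index:
  assumes "K \<in> carrier_mat r c" "a < c" "b < c"
  shows "(mat_adjoint K * K) $$ (a,b) = (\<Sum>p<r. cnj (K $$ (p,a)) * K $$ (p,b))"
  using assms adj_carrier[OF assms(1)]
  by (auto simp: scalar_prod_def adj_index lessThan_atLeast0 intro!: sum.cong)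

lemma apply_kraus_index:
  assumes "\<forall>K\<in>set Ks. K \<in> carrier_mat r c" "\<rho> \<in> carrier_mat c c" "a < r" "b < r"
  shows "apply_kraus r Ks \<rho> $$ (a,b) = (\<Sum>t<length Ks. \<Sum>p<c. \<Sum>q<c. (Ks!t) $$ (a,p) * \<rho> $$ (p,q) * cnj ((Ks!t) $$ (b,q)))"
proof -
  have cr: "\<forall>K\<in>set Ks. K * \<rho> * mat_adjoint K \<in> carrier_mat r r"
    using assms(1,2) adj_carrier by (meson mult_carrier_mat)
  show ?thesis
    unfolding apply_kraus_def
    using foldr_sum_index[OF cr assms(3,4)] assms
    by (auto simp: nth_mem intro!: sum.cong kraus_term_index)
qed

lemma apply_kraus_carrier:
  assumes "\<forall>K\<in>set Ks. K \<in> carrier_mat r c" "\<rho> \<in> carrier_mat c c"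
  shows "apply_kraus r Ks \<rho> \<in> carrier_mat r r"
  unfolding apply_kraus_def
proof (intro foldr_sum_carrier ballI)
  fix K assume "K \<in> set Ks"
  then have "K \<in> carrier_mat r c" using assms by auto
  then show "K * \<rho> * mat_adjoint K \<in> carrier_mat r r"
    using assms(2) adj_carrier by (meson mult_carrier_mat)
qed

lemma cnjsq: "cnj z * z = complex_of_real ((cmod z)^2)"
  by (metis complex_norm_square mult.commute of_real_power)

lemma kraus_sum_one:
  assumes "kraus_channel c r Ks" "a < c"
  shows "(\<Sum>t<length Ks. \<Sum>p<r. (cmod ((Ks!t) $$ (p,a)))^2) = 1"
proof -
  have car: "\<forall>K\<in>set Ks. K \<in> carrier_mat r c" using assms unfolding kraus_channel_def by auto
  have cr: "\<forall>K\<in>set Ks. mat_adjoint K * K \<in> carrier_mat c c"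
  proof
    fix K assume "K \<in> set Ks"
    then have "K \<in> carrier_mat r c" using car by auto
    then show "mat_adjoint K * K \<in> carrier_mat c c" using adj_carrier by (meson mult_carrier_mat)
  qed
  have "1 = (1\<^sub>m c :: complex mat) $$ (a,a)" using assms by simp
  also have "\<dots> = (\<Sum>t<length Ks. (mat_adjoint (Ks!t) * (Ks!t)) $$ (a,a))"
    using assms foldr_sum_index[OF cr assms(2) assms(2)] unfolding kraus_channel_def by simp
  also have "\<dots> = (\<Sum>t<length Ks. \<Sum>p<r. of_real ((cmod ((Ks!t) $$ (p,a)))^2))"
  proof (intro sum.cong refl)
    fix t assume "t \<in> {..<length Ks}"
    then have "Ks!t \<in> carrier_mat r c" using car by (simp add: nth_mem)
    then show "(mat_adjoint (Ks!t) * (Ks!t)) $$ (a,a) = (\<Sum>p<r. of_real ((cmod ((Ks!t) $$ (p,a)))^2))"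
      using assms(2) by (simp add: adjK_index cnjsq)
  qed
  also have "\<dots> = of_real (\<Sum>t<length Ks. \<Sum>p<r. (cmod ((Ks!t) $$ (p,a)))^2)"
    by (simp only: of_real_sum)
  finally have e: "(1::complex) = of_real (\<Sum>t<length Ks. \<Sum>p<r. (cmod ((Ks!t) $$ (p,a)))^2)" .
  have "Re (1::complex) = Re (of_real (\<Sum>t<length Ks. \<Sum>p<r. (cmod ((Ks!t) $$ (p,a)))^2))"
    using e by (rule arg_cong)
  then show ?thesis by (simp only: Re_complex_of_real) simp
qed


lemma cs_real:
  fixes a b :: "'i \<Rightarrow> real"
  shows "(\<Sum>i\<in>I. a i * b i)^2 \<le> (\<Sum>i\<in>I. (a i)^2) * (\<Sum>i\<in>I. (b i)^2)"
proof -
  have "0 \<le> (\<Sum>i\<in>I. \<Sum>j\<in>I. (a i * b j - a j * b i)^2)"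
    by (intro sum_nonneg) auto
  also have "\<dots> = (\<Sum>i\<in>I. \<Sum>j\<in>I. (a i)^2 * (b j)^2 + (b i)^2 * (a j)^2 - 2 * ((a i * b i) * (a j * b j)))"
    by (intro sum.cong refl) (simp add: power2_eq_square algebra_simps)
  also have "\<dots> = (\<Sum>i\<in>I. (a i)^2) * (\<Sum>i\<in>I. (b i)^2) + (\<Sum>i\<in>I. (b i)^2) * (\<Sum>i\<in>I. (a i)^2)
       - 2 * ((\<Sum>i\<in>I. a i * b i) * (\<Sum>i\<in>I. a i * b i))"
  proof -
    have p1: "(\<Sum>i\<in>I. (a i)^2) * (\<Sum>i\<in>I. (b i)^2) = (\<Sum>i\<in>I. \<Sum>j\<in>I. (a i)^2 * (b j)^2)"
      by (rule sum_product)
    have p2: "(\<Sum>i\<in>I. (b i)^2) * (\<Sum>i\<in>I. (a i)^2) = (\<Sum>i\<in>I. \<Sum>j\<in>I. (b i)^2 * (a j)^2)"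
      by (rule sum_product)
    have p3: "(\<Sum>i\<in>I. a i * b i) * (\<Sum>i\<in>I. a i * b i) = (\<Sum>i\<in>I. \<Sum>j\<in>I. (a i * b i) * (a j * b j))"
      by (rule sum_product)
    show ?thesis unfolding p1 p2 p3
      by (simp add: sum.distrib sum_subtractf sum_distrib_left)
  qed
  also have "\<dots> = 2 * ((\<Sum>i\<in>I. (a i)^2) * (\<Sum>i\<in>I. (b i)^2) - (\<Sum>i\<in>I. a i * b i)^2)"
    by (simp add: power2_eq_square algebra_simps)
  finally show ?thesis by simp
qed

lemma cs_complex:
  fixes x y :: "'i \<Rightarrow> complex"
  assumes "finite I"
  shows "(cmod (\<Sum>i\<in>I. x i * y i))^2 \<le> (\<Sum>i\<in>I. (cmod (x i))^2) * (\<Sum>i\<in>I. (cmod (y i))^2)"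
proof -
  have "cmod (\<Sum>i\<in>I. x i * y i) \<le> (\<Sum>i\<in>I. cmod (x i) * cmod (y i))"
    using norm_sum[of "\<lambda>i. x i * y i" I] by (simp add: norm_mult)
  then have "(cmod (\<Sum>i\<in>I. x i * y i))^2 \<le> (\<Sum>i\<in>I. cmod (x i) * cmod (y i))^2"
    by (intro power_mono) auto
  also have "\<dots> \<le> (\<Sum>i\<in>I. (cmod (x i))^2) * (\<Sum>i\<in>I. (cmod (y i))^2)"
    by (rule cs_real)
  finally show ?thesis .
qed

lemma reorder6:
  "(\<Sum>i\<in>I. \<Sum>j\<in>J. \<Sum>l\<in>LL. \<Sum>a\<in>A. \<Sum>b\<in>B. \<Sum>t\<in>TT. h l t a b i j) =
   (\<Sum>l\<in>LL. \<Sum>t\<in>TT. \<Sum>a\<in>A. \<Sum>b\<in>B. \<Sum>i\<in>I. \<Sum>j\<in>J. h l t a b i j)"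
proof -
  have "(\<Sum>i\<in>I. \<Sum>j\<in>J. \<Sum>l\<in>LL. \<Sum>a\<in>A. \<Sum>b\<in>B. \<Sum>t\<in>TT. h l t a b i j) =
        (\<Sum>i\<in>I. \<Sum>l\<in>LL. \<Sum>j\<in>J. \<Sum>a\<in>A. \<Sum>b\<in>B. \<Sum>t\<in>TT. h l t a b i j)"
    by ((rule sum.cong[OF refl])+)? (rule sum.swap)
  also have "\<dots> = (\<Sum>i\<in>I. \<Sum>l\<in>LL. \<Sum>a\<in>A. \<Sum>j\<in>J. \<Sum>b\<in>B. \<Sum>t\<in>TT. h l t a b i j)"
    by ((rule sum.cong[OF refl])+)? (rule sum.swap)
  also have "\<dots> = (\<Sum>i\<in>I. \<Sum>l\<in>LL. \<Sum>a\<in>A. \<Sum>b\<in>B. \<Sum>j\<in>J. \<Sum>t\<in>TT. h l t a b i j)"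
    by ((rule sum.cong[OF refl])+)? (rule sum.swap)
  also have "\<dots> = (\<Sum>i\<in>I. \<Sum>l\<in>LL. \<Sum>a\<in>A. \<Sum>b\<in>B. \<Sum>t\<in>TT. \<Sum>j\<in>J. h l t a b i j)"
    by ((rule sum.cong[OF refl])+)? (rule sum.swap)
  also have "\<dots> = (\<Sum>l\<in>LL. \<Sum>i\<in>I. \<Sum>a\<in>A. \<Sum>b\<in>B. \<Sum>t\<in>TT. \<Sum>j\<in>J. h l t a b i j)"
    by ((rule sum.cong[OF refl])+)? (rule sum.swap)
  also have "\<dots> = (\<Sum>l\<in>LL. \<Sum>a\<in>A. \<Sum>i\<in>I. \<Sum>b\<in>B. \<Sum>t\<in>TT. \<Sum>j\<in>J. h l t a b i j)"
    by ((rule sum.cong[OF refl])+)? (rule sum.swap)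
  also have "\<dots> = (\<Sum>l\<in>LL. \<Sum>a\<in>A. \<Sum>b\<in>B. \<Sum>i\<in>I. \<Sum>t\<in>TT. \<Sum>j\<in>J. h l t a b i j)"
    by ((rule sum.cong[OF refl])+)? (rule sum.swap)
  also have "\<dots> = (\<Sum>l\<in>LL. \<Sum>a\<in>A. \<Sum>b\<in>B. \<Sum>t\<in>TT. \<Sum>i\<in>I. \<Sum>j\<in>J. h l t a b i j)"
    by ((rule sum.cong[OF refl])+)? (rule sum.swap)
  also have "\<dots> = (\<Sum>l\<in>LL. \<Sum>a\<in>A. \<Sum>t\<in>TT. \<Sum>b\<in>B. \<Sum>i\<in>I. \<Sum>j\<in>J. h l t a b i j)"
    by ((rule sum.cong[OF refl])+)? (rule sum.swap)
  also have "\<dots> = (\<Sum>l\<in>LL. \<Sum>t\<in>TT. \<Sum>a\<in>A. \<Sum>b\<in>B. \<Sum>i\<in>I. \<Sum>j\<in>J. h l t a b i j)"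
    by ((rule sum.cong[OF refl])+)? (rule sum.swap)
  finally show ?thesis .
qed

lemma count_mod:
  fixes f :: real
  assumes "m \<ge> 1" "a < M * m"
  shows "(\<Sum>b<M*m. if a mod m = b mod m then f else 0) = real M * f"
proof -
  let ?r = "a mod m"
  have r: "?r < m" using assms by simp
  have eq: "{b\<in>{..<M*m}. a mod m = b mod m} = (\<lambda>q. q*m + ?r) ` {..<M}"
  proof (rule equalityI; rule subsetI)
    fix b assume "b \<in> {b\<in>{..<M*m}. a mod m = b mod m}"
    then have b: "b < M*m" "b mod m = ?r" by auto
    have "b = (b div m)*m + ?r" using b(2) by (metis div_mult_mod_eq)
    moreover have "b div m < M" using b(1) by (simp add: less_mult_imp_div_less)
    ultimately show "b \<in> (\<lambda>q. q*m + ?r) ` {..<M}" by blast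
  next
    fix b assume "b \<in> (\<lambda>q. q*m + ?r) ` {..<M}"
    then obtain q where q: "q < M" "b = q*m + ?r" by auto
    have "q*m + ?r < q*m + m" using r by simp
    also have "\<dots> = (q+1)*m" by simp
    also have "\<dots> \<le> M*m" using q(1) by (intro mult_right_mono) auto
    finally have "b < M*m" using q by simp
    moreover have "b mod m = ?r" using q r by simp
    ultimately show "b \<in> {b\<in>{..<M*m}. a mod m = b mod m}" by simp
  qed
  have inj: "inj_on (\<lambda>q. q*m + ?r) {..<M}"
    using assms(1) by (intro inj_onI) simp
  have "(\<Sum>b<M*m. if a mod m = b mod m then f else 0) = (\<Sum>b\<in>{b\<in>{..<M*m}. a mod m = b mod m}. f)"
    by (simp only: sum.inter_filter[OF finite_lessThan])
  also have "\<dots> = real (card {b\<in>{..<M*m}. a mod m = b mod m}) * f" by (rule sum_constant)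
  also have "card {b\<in>{..<M*m}. a mod m = b mod m} = M"
    unfolding eq using card_image[OF inj] by simp
  finally show ?thesis .
qed

lemma re_bound: "Re (z * cnj w) \<le> ((cmod z)^2 + (cmod w)^2) / 2"
proof -
  have "Re (z * cnj w) \<le> cmod (z * cnj w)" by (rule complex_Re_le_cmod)
  also have "\<dots> = cmod z * cmod w" by (simp add: norm_mult)
  also have "\<dots> \<le> ((cmod z)^2 + (cmod w)^2) / 2"
  proof -
    have h: "2 * (cmod z * cmod w) \<le> (cmod z)^2 + (cmod w)^2"
      using sum_squares_bound[of "cmod z" "cmod w"] by (simp add: mult.assoc)
    then show ?thesis by (simp add: field_simps)
  qed
  finally show ?thesis .
qed


lemma re_if: "Re (if P then x else 0) = (if P then Re x else 0)"
  by simp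

lemma if_le: "x \<le> y \<Longrightarrow> (if P then x else 0) \<le> (if P then y else (0::real))"
  by simp

lemma delta2:
  fixes F :: "nat \<Rightarrow> nat \<Rightarrow> complex"
  assumes "i < d" "j < d"
  shows "(\<Sum>p<d. \<Sum>q<d. (if p = i \<and> q = j then F p q else 0)) = F i j"
proof -
  have "(\<Sum>p<d. \<Sum>q<d. (if p = i \<and> q = j then F p q else 0)) = (\<Sum>p<d. if p = i then (\<Sum>q<d. if q = j then F p q else 0) else 0)"
    by (intro sum.cong refl) auto
  also have "\<dots> = F i j" using assms by simp
  finally show ?thesis .
qed

lemma sym_half:
  fixes f :: "nat \<Rightarrow> real"
  shows "(\<Sum>a<n. \<Sum>b<n. if a mod m = b mod m then (f a + f b) / 2 else 0)
       = (\<Sum>a<n. \<Sum>b<n. if a mod m = b mod m then f a else 0)"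
proof -
  have sw: "(\<Sum>a<n. \<Sum>b<n. if a mod m = b mod m then f b else 0) = (\<Sum>a<n. \<Sum>b<n. if a mod m = b mod m then f a else 0)"
    by (subst sum.swap) (rule sum.cong[OF refl], rule sum.cong[OF refl], auto)
  have "(\<Sum>a<n. \<Sum>b<n. if a mod m = b mod m then (f a + f b) / 2 else 0)
      = (\<Sum>a<n. \<Sum>b<n. (if a mod m = b mod m then f a else 0) / 2 + (if a mod m = b mod m then f b else 0) / 2)"
    by (intro sum.cong refl) (simp add: add_divide_distrib)
  also have "\<dots> = (\<Sum>a<n. \<Sum>b<n. if a mod m = b mod m then f a else 0) / 2 + (\<Sum>a<n. \<Sum>b<n. if a mod m = b mod m then f b else 0) / 2"
    by (simp add: sum.distrib sum_divide_distrib)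
  finally show ?thesis unfolding sw by simp
qed


theorem lemma16:
  fixes R :: real and N k m :: nat
    and KE KD :: "complex mat list"
  assumes "R > 1" and "N \<ge> 1" and "real k = R * real N"
    and "m \<ge> 1"
    and "kraus_channel (2 ^ k) (2 ^ N * m) KE"
    and "kraus_channel (2 ^ N * m) (2 ^ k) KD"
  shows "Re (channel_fidelity (2 ^ k)
            (apply_kraus (2 ^ k) KD \<circ> apply_kraus (2 ^ N * m) (id_qubits_classical N m)
               \<circ> apply_kraus (2 ^ N * m) KE))
         \<le> 2 powr (- (R - 1) * real N)"
proof -
  define d where "d = (2::nat)^k"
  define n where "n = (2::nat)^N * m"
  define L where "L = length KD"
  define T where "T = length KE"
  define Ps where "Ps = id_qubits_classical N m"
  define \<Lambda> where "\<Lambda> = apply_kraus d KD \<circ> apply_kraus n Ps \<circ> apply_kraus n KE"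
  have kE: "kraus_channel d n KE" using assms(5) by (simp add: d_def n_def)
  have kD: "kraus_channel n d KD" using assms(6) by (simp add: d_def n_def)
  have carE: "\<forall>K\<in>set KE. K \<in> carrier_mat n d" using kE unfolding kraus_channel_def by auto
  have carD: "\<forall>K\<in>set KD. K \<in> carrier_mat d n" using kD unfolding kraus_channel_def by auto
  have lenP: "length Ps = m" unfolding Ps_def id_qubits_classical_def by simp
  have nthP: "\<And>x. x < m \<Longrightarrow> Ps!x = classical_reg_proj N m x"
    unfolding Ps_def id_qubits_classical_def by simp
  have carP: "\<forall>K\<in>set Ps. K \<in> carrier_mat n n"
    unfolding Ps_def id_qubits_classical_def classical_reg_proj_def n_def by auto
  have idxP: "\<And>x a p. a < n \<Longrightarrow> p < n \<Longrightarrow> classical_reg_proj N m x $$ (a,p) = (if a = p \<and> a mod m = x then 1 else 0)"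
    by (simp add: classical_reg_proj_def n_def)
  have m0: "m > 0" using assms(4) by simp
  define h where "h l t a b i j = (if a mod m = b mod m then (KD!l)$$(i,a) * (KE!t)$$(a,i) * cnj ((KD!l)$$(j,b) * (KE!t)$$(b,j)) else 0)"
    for l t a b i j
  define c where "c l t a = (\<Sum>i<d. (KD!l)$$(i,a) * (KE!t)$$(a,i))" for l t a
  have W: "\<Lambda> (mat_unit d i j) $$ (i,j) = (\<Sum>l<L. \<Sum>a<n. \<Sum>b<n. \<Sum>t<T. h l t a b i j)"
    if ij: "i < d" "j < d" for i j
  proof -
    define X where "X = mat_unit d i j"
    have Xc: "X \<in> carrier_mat d d" unfolding X_def mat_unit_def by simp
    have Xi: "\<And>p q. p < d \<Longrightarrow> q < d \<Longrightarrow> X $$ (p,q) = (if p = i \<and> q = j then 1 else 0)"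
      unfolding X_def mat_unit_def by simp
    define Z where "Z = apply_kraus n KE X"
    have Zc: "Z \<in> carrier_mat n n" unfolding Z_def using apply_kraus_carrier[OF carE Xc] .
    have Zi: "Z $$ (a,b) = (\<Sum>t<T. (KE!t)$$(a,i) * cnj ((KE!t)$$(b,j)))" if "a < n" "b < n" for a b
    proof -
      have "Z $$ (a,b) = (\<Sum>t<T. \<Sum>p<d. \<Sum>q<d. (KE!t) $$ (a,p) * X $$ (p,q) * cnj ((KE!t) $$ (b,q)))"
        unfolding Z_def T_def using apply_kraus_index[OF carE Xc that] .
      also have "\<dots> = (\<Sum>t<T. \<Sum>p<d. \<Sum>q<d. (if p = i \<and> q = j then (KE!t) $$ (a,p) * cnj ((KE!t) $$ (b,q)) else 0))"
        by (intro sum.cong refl) (simp add: Xi)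
      also have "\<dots> = (\<Sum>t<T. (KE!t)$$(a,i) * cnj ((KE!t)$$(b,j)))"
        by (intro sum.cong refl) (rule delta2[OF ij])
      finally show ?thesis .
    qed
    define Y where "Y = apply_kraus n Ps Z"
    have Yc: "Y \<in> carrier_mat n n" unfolding Y_def using apply_kraus_carrier[OF carP Zc] .
    have Yi: "Y $$ (a,b) = (if a mod m = b mod m then Z $$ (a,b) else 0)" if ab: "a < n" "b < n" for a b
    proof -
      have "Y $$ (a,b) = (\<Sum>x<m. \<Sum>p<n. \<Sum>q<n. (Ps!x) $$ (a,p) * Z $$ (p,q) * cnj ((Ps!x) $$ (b,q)))"
        unfolding Y_def using apply_kraus_index[OF carP Zc that] lenP by simp
      also have "\<dots> = (\<Sum>x<m. \<Sum>p<n. \<Sum>q<n. (if p = a \<and> q = b then (if a mod m = x \<and> b mod m = x then Z $$ (p,q) else 0) else 0))"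
        using ab by (intro sum.cong refl) (auto simp: nthP idxP)
      also have "\<dots> = (\<Sum>x<m. (if a mod m = x \<and> b mod m = x then Z $$ (a,b) else 0))"
        by (intro sum.cong refl) (rule delta2[OF ab])
      also have "\<dots> = (if a mod m = b mod m then Z $$ (a,b) else 0)"
      proof (cases "a mod m = b mod m")
        case True
        have "(\<Sum>x<m. (if a mod m = x \<and> b mod m = x then Z $$ (a,b) else 0)) = (\<Sum>x<m. (if x = a mod m then Z $$ (a,b) else 0))"
          using True by (intro sum.cong refl) auto
        also have "\<dots> = Z $$ (a,b)" using m0 by simp
        finally show ?thesis using True by simp
      next
        case False
        then show ?thesis by (intro trans[OF sum.neutral]) auto
      qed
      finally show ?thesis .
    qed
    have "\<Lambda> X $$ (i,j) = apply_kraus d KD Y $$ (i,j)" unfolding \<Lambda>_def Y_def Z_def by simp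
    also have "\<dots> = (\<Sum>l<L. \<Sum>a<n. \<Sum>b<n. (KD!l) $$ (i,a) * Y $$ (a,b) * cnj ((KD!l) $$ (j,b)))"
      unfolding L_def using apply_kraus_index[OF carD Yc ij] .
    also have "\<dots> = (\<Sum>l<L. \<Sum>a<n. \<Sum>b<n. \<Sum>t<T. h l t a b i j)"
      by (intro sum.cong refl)
         (auto simp: Yi Zi h_def sum_distrib_left sum_distrib_right algebra_simps intro!: sum.cong)
    finally show ?thesis unfolding X_def .
  qed
  have S: "(\<Sum>i<d. \<Sum>j<d. \<Lambda> (mat_unit d i j) $$ (i,j))
        = (\<Sum>l<L. \<Sum>t<T. \<Sum>a<n. \<Sum>b<n. if a mod m = b mod m then c l t a * cnj (c l t b) else 0)"
  proof -
    have "(\<Sum>i<d. \<Sum>j<d. \<Lambda> (mat_unit d i j) $$ (i,j)) = (\<Sum>i<d. \<Sum>j<d. \<Sum>l<L. \<Sum>a<n. \<Sum>b<n. \<Sum>t<T. h l t a b i j)"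
      by (intro sum.cong refl) (simp add: W)
    also have "\<dots> = (\<Sum>l<L. \<Sum>t<T. \<Sum>a<n. \<Sum>b<n. \<Sum>i<d. \<Sum>j<d. h l t a b i j)"
      by (rule reorder6)
    also have "\<dots> = (\<Sum>l<L. \<Sum>t<T. \<Sum>a<n. \<Sum>b<n. if a mod m = b mod m then c l t a * cnj (c l t b) else 0)"
    proof (intro sum.cong refl)
      fix l t a b
      show "(\<Sum>i<d. \<Sum>j<d. h l t a b i j) = (if a mod m = b mod m then c l t a * cnj (c l t b) else 0)"
      proof (cases "a mod m = b mod m")
        case True
        have "c l t a * cnj (c l t b) = (\<Sum>i<d. (KD!l)$$(i,a) * (KE!t)$$(a,i)) * (\<Sum>j<d. cnj ((KD!l)$$(j,b) * (KE!t)$$(b,j)))"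
          unfolding c_def by (simp add: cnj_sum)
        also have "\<dots> = (\<Sum>i<d. \<Sum>j<d. h l t a b i j)"
          unfolding h_def using True by (simp add: sum_product)
        finally show ?thesis using True by simp
      next
        case False
        then show ?thesis by (simp add: h_def)
      qed
    qed
    finally show ?thesis .
  qed
  define u where "u l a = (\<Sum>i<d. (cmod ((KD!l)$$(i,a)))^2)" for l a
  define v where "v t a = (\<Sum>i<d. (cmod ((KE!t)$$(a,i)))^2)" for t a
  have uone: "(\<Sum>l<L. u l a) = 1" if "a < n" for a
    using kraus_sum_one[OF kD that] unfolding u_def L_def .
  have vone: "(\<Sum>t<T. \<Sum>p<n. (cmod ((KE!t)$$(p,i)))^2) = 1" if "i < d" for i
    using kraus_sum_one[OF kE that] unfolding T_def .
  have "Re (\<Sum>l<L. \<Sum>t<T. \<Sum>a<n. \<Sum>b<n. if a mod m = b mod m then c l t a * cnj (c l t b) else 0)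
      = (\<Sum>l<L. \<Sum>t<T. \<Sum>a<n. \<Sum>b<n. if a mod m = b mod m then Re (c l t a * cnj (c l t b)) else 0)"
    by (simp add: Re_sum re_if)
  also have "\<dots> \<le> (\<Sum>l<L. \<Sum>t<T. \<Sum>a<n. \<Sum>b<n. if a mod m = b mod m then ((cmod (c l t a))^2 + (cmod (c l t b))^2) / 2 else 0)"
    by (intro sum_mono if_le re_bound)
  also have "\<dots> = (\<Sum>l<L. \<Sum>t<T. \<Sum>a<n. \<Sum>b<n. if a mod m = b mod m then (cmod (c l t a))^2 else 0)"
    by (rule sum.cong[OF refl], rule sum.cong[OF refl], rule sym_half)
  also have "\<dots> = (\<Sum>l<L. \<Sum>t<T. \<Sum>a<n. 2^N * (cmod (c l t a))^2)"
  proof (intro sum.cong refl)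
    fix l t a assume "a \<in> {..<n}"
    then have "a < 2^N * m" by (simp add: n_def)
    then show "(\<Sum>b<n. if a mod m = b mod m then (cmod (c l t a))^2 else 0) = 2^N * (cmod (c l t a))^2"
      using count_mod[OF assms(4), of a "2^N" "(cmod (c l t a))^2"] unfolding n_def by simp
  qed
  also have "\<dots> \<le> (\<Sum>l<L. \<Sum>t<T. \<Sum>a<n. 2^N * (u l a * v t a))"
  proof (intro sum_mono mult_left_mono)
    fix l t a
    show "(cmod (c l t a))^2 \<le> u l a * v t a"
      unfolding c_def u_def v_def by (rule cs_complex) simp
  qed simp
  also have "\<dots> = 2^N * (\<Sum>l<L. \<Sum>a<n. \<Sum>t<T. u l a * v t a)"
  proof -
    have "(\<Sum>l<L. \<Sum>t<T. \<Sum>a<n. 2^N * (u l a * v t a)) = 2^N * (\<Sum>l<L. \<Sum>t<T. \<Sum>a<n. u l a * v t a)"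
      by (simp add: sum_distrib_left)
    also have "(\<Sum>l<L. \<Sum>t<T. \<Sum>a<n. u l a * v t a) = (\<Sum>l<L. \<Sum>a<n. \<Sum>t<T. u l a * v t a)"
      by (rule sum.cong[OF refl], rule sum.swap)
    finally show ?thesis .
  qed
  also have "\<dots> = 2^N * (\<Sum>a<n. \<Sum>l<L. \<Sum>t<T. u l a * v t a)"
    by (subst sum.swap[of _ "{..<L}"]) (rule refl)
  also have "\<dots> = 2^N * (\<Sum>a<n. (\<Sum>l<L. u l a) * (\<Sum>t<T. v t a))"
    by (simp add: sum_product)
  also have "\<dots> = 2^N * (\<Sum>a<n. \<Sum>t<T. \<Sum>i<d. (cmod ((KE!t)$$(a,i)))^2)"
    by (simp add: uone v_def)
  also have "\<dots> = 2^N * (\<Sum>i<d. \<Sum>t<T. \<Sum>a<n. (cmod ((KE!t)$$(a,i)))^2)"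
  proof -
    have "(\<Sum>a<n. \<Sum>t<T. \<Sum>i<d. (cmod ((KE!t)$$(a,i)))^2) = (\<Sum>t<T. \<Sum>a<n. \<Sum>i<d. (cmod ((KE!t)$$(a,i)))^2)"
      by (rule sum.swap)
    also have "\<dots> = (\<Sum>t<T. \<Sum>i<d. \<Sum>a<n. (cmod ((KE!t)$$(a,i)))^2)"
      by (intro sum.cong refl sum.swap)
    also have "\<dots> = (\<Sum>i<d. \<Sum>t<T. \<Sum>a<n. (cmod ((KE!t)$$(a,i)))^2)"
      by (rule sum.swap)
    finally show ?thesis by simp
  qed
  also have "\<dots> = 2^N * (\<Sum>i<d. (1::real))"
    by (subst sum.cong[OF refl vone]) simp_all
  also have "\<dots> = 2^N * real d"
    by simp
  finally have Rb: "Re (\<Sum>l<L. \<Sum>t<T. \<Sum>a<n. \<Sum>b<n. if a mod m = b mod m then c l t a * cnj (c l t b) else 0) \<le> 2^N * real d" .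
  have dpos: "real d > 0" unfolding d_def by simp
  have "Re (channel_fidelity d \<Lambda>) = Re (\<Sum>i<d. \<Sum>j<d. \<Lambda> (mat_unit d i j) $$ (i,j)) / real (d * d)"
    unfolding channel_fidelity_def by (simp del: of_nat_mult)
  also have "\<dots> \<le> 2^N * real d / real (d * d)"
    unfolding S using Rb dpos by (intro divide_right_mono) auto
  also have "\<dots> = 2^N / real d" using dpos by simp
  also have "\<dots> = 2 powr (- (R - 1) * real N)"
  proof -
    have "- (R - 1) * real N = real N - real k" using assms(3) by (simp add: algebra_simps)
    then have "2 powr (- (R - 1) * real N) = 2 powr real N / 2 powr real k" by (simp add: powr_diff)
    also have "\<dots> = 2^N / real d" by (simp add: powr_realpow d_def)
    finally show ?thesis by simp
  qed
  finally show ?thesis unfolding \<Lambda>_def d_def n_def Ps_def .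
qed

end
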